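(* Let $p\ge1$ be an integer and let $\bm U:[0,T]\to\mathbb V_h$ be a differentiable solution of the semi-discrete system $$(\bm I+\mathbb A^2)\frac{d}{dt}\bm U+\mathbb D(\bm U)\bm U=0.$$ Then $P(t)=\|\bm U(t)\|_h^2+|\bm U(t)|_{2,h}^2$ satisfies $P(t)=P(0)$ for all $t\in[0,T]$.
   Context: $\Omega=[x_L,x_R]\times[y_L,y_R]$, $l_1=x_R-x_L$, $l_2=y_R-y_L$, $N_1,N_2$ even, $h_r=l_r/N_r$, grid points $x_{j_1}=x_L+j_1h_1$, $y_{j_2}=y_L+j_2h_2$, $0\le j_r\le N_r-1$. $\mathbb V_h$: doubly periodic grid functions identified with vectors $\bm U=(U_{0,0},U_{1,0},\dots,U_{N_1-1,0},U_{0,1},\dots,U_{N_1-1,N_2-1})^T$. $\langle\bm U,\bm V\rangle_h=h_1h_2\sum U_{j_1,j_2}V_{j_1,j_2}$, $\|\bm U\|_h^2=\langle\bm U,\bm U\rangle_h$. With $\mu_r=2\pi/l_r$, $g^{(1)}_k(x)=\frac1{N_1}\sum_{l=-N_1/2}^{N_1/2}\frac1{a_l}e^{\mathrm il\mu_1(x-x_k)}$, $a_l=1$ for $|l|<N_1/2$, $a_{\pm N_1/2}=2$ (similarly $g^{(2)}_k(y)$), $\bm D_s^x=(\frac{d^s}{dx^s}g^{(1)}_k(x_j))_{j,k=0}^{N_1-1}$, $\bm D_s^y=(\frac{d^s}{dy^s}g^{(2)}_k(y_j))_{j,k=0}^{N_2-1}$. $\mathbb A=\bm I_{N_2}\otimes\bm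 D_2^x+\bm D_2^y\otimes\bm I_{N_1}$, $\mathbb B=\bm I_{N_2}\otimes\bm D_3^x+\bm D_2^y\otimes\bm D_1^x$, $\mathbb L_h=\bm I_{N_2}\otimes\bm D_1^x+\bm D_1^y\otimes\bm I_{N_1}$ ($\otimes$ Kronecker product), $\mathbb D(\bm W)=\mathbb B+\mathbb L_h+\frac1{p+2}(\mathrm{diag}(\bm W^p)\mathbb L_h+\mathbb L_h\mathrm{diag}(\bm W^p))$ with $\bm W^p$ the componentwise power; $|\bm U|_{2,h}=\|\mathbb A\bm U\|_h$. This system is the Fourier pseudo-spectral semi-discretization of the GR-KdV equation $u_t+\Delta^2u_t+\Delta u_x+(1+u^p)(u_x+u_y)=0$ with periodic boundary conditions. *)

theory Defs
  imports Complex_Main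
begin

text \<open>Square matrices are represented as functions nat => nat => real (only the
entries with indices below the size matter); vectors as nat => real.\<close>

definition idm :: "nat \<Rightarrow> nat \<Rightarrow> real" where
  "idm i j = (if i = j then 1 else 0)"

definition madd :: "(nat \<Rightarrow> nat \<Rightarrow> real) \<Rightarrow> (nat \<Rightarrow> nat \<Rightarrow> real) \<Rightarrow> nat \<Rightarrow> nat \<Rightarrow> real" where
  "madd A B i j = A i j + B i j"

definition msmult :: "real \<Rightarrow> (nat \<Rightarrow> nat \<Rightarrow> real) \<Rightarrow> nat \<Rightarrow> nat \<Rightarrow> real" where
  "msmult c A i j = c * A i j"

definition mmult :: "nat \<Rightarrow> (nat \<Rightarrow> nat \<Rightarrow> real) \<Rightarrow> (nat \<Rightarrow> nat \<Rightarrow> real) \<Rightarrow> nat \<Rightarrow> nat \<Rightarrow> real" where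
  "mmult n A B i j = (\<Sum>k<n. A i k * B k j)"

definition mvec :: "nat \<Rightarrow> (nat \<Rightarrow> nat \<Rightarrow> real) \<Rightarrow> (nat \<Rightarrow> real) \<Rightarrow> nat \<Rightarrow> real" where
  "mvec n A v i = (\<Sum>k<n. A i k * v k)"

definition kron :: "nat \<Rightarrow> (nat \<Rightarrow> nat \<Rightarrow> real) \<Rightarrow> (nat \<Rightarrow> nat \<Rightarrow> real) \<Rightarrow> nat \<Rightarrow> nat \<Rightarrow> real" where
  "kron n A B i j = A (i div n) (j div n) * B (i mod n) (j mod n)"

definition mdiag :: "(nat \<Rightarrow> real) \<Rightarrow> nat \<Rightarrow> nat \<Rightarrow> real" where
  "mdiag v i j = (if i = j then v i else 0)"

definition aw :: "nat \<Rightarrow> int \<Rightarrow> real" where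
  "aw N l = (if \<bar>l\<bar> = int N div 2 then 2 else 1)"

text \<open>s-th derivative of the basis function
  g_k(x) = 1/N sum_{l=-N/2}^{N/2} 1/a_l exp(i l mu (x - x_k)), mu = 2 pi / len,
  on the grid x_j = xL + j*len/N, written out explicitly:
  d^s/dx^s g_k(x) = 1/N sum_l 1/a_l (i l mu)^s exp(i l mu (x - x_k)).
  These entries are real numbers; we take the real part to obtain a real matrix.\<close>
definition gridpt :: "real \<Rightarrow> real \<Rightarrow> nat \<Rightarrow> nat \<Rightarrow> real" where
  "gridpt xL len N j = xL + real j * (len / real N)"

definition dg :: "real \<Rightarrow> real \<Rightarrow> nat \<Rightarrow> nat \<Rightarrow> nat \<Rightarrow> real \<Rightarrow> complex" where
  "dg xL len N s k x =
     (let \<mu> = 2 * pi / len in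
      (1 / of_nat N) * (\<Sum>l\<in>{-(int N div 2)..int N div 2}.
          (1 / complex_of_real (aw N l)) * (\<i> * of_int l * complex_of_real \<mu>) ^ s
          * cis (real_of_int l * \<mu> * (x - gridpt xL len N k))))"

definition Dmat :: "real \<Rightarrow> real \<Rightarrow> nat \<Rightarrow> nat \<Rightarrow> nat \<Rightarrow> nat \<Rightarrow> real" where
  "Dmat xL len N s j k = Re (dg xL len N s k (gridpt xL len N j))"

text \<open>The matrices A, B, L_h and D(W) of the semi-discretization
  (N1 points in x over length l1 starting at xL, N2 points in y over length l2 starting at yL).\<close>
definition Amat where
  "Amat xL l1 N1 yL l2 N2 =
     madd (kron N1 idm (Dmat xL l1 N1 2)) (kron N1 (Dmat yL l2 N2 2) idm)"

definition Bmat where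
  "Bmat xL l1 N1 yL l2 N2 =
     madd (kron N1 idm (Dmat xL l1 N1 3)) (kron N1 (Dmat yL l2 N2 2) (Dmat xL l1 N1 1))"

definition Lmat where
  "Lmat xL l1 N1 yL l2 N2 =
     madd (kron N1 idm (Dmat xL l1 N1 1)) (kron N1 (Dmat yL l2 N2 1) idm)"

definition DWmat where
  "DWmat xL l1 N1 yL l2 N2 (p::nat) (W::nat \<Rightarrow> real) =
     (let L = Lmat xL l1 N1 yL l2 N2; M = N1 * N2 in
      madd (madd (Bmat xL l1 N1 yL l2 N2) L)
        (msmult (1 / (real p + 2))
           (madd (mmult M (mdiag (\<lambda>i. W i ^ p)) L) (mmult M L (mdiag (\<lambda>i. W i ^ p))))))"

definition inner_h :: "real \<Rightarrow> real \<Rightarrow> nat \<Rightarrow> (nat \<Rightarrow> real) \<Rightarrow> (nat \<Rightarrow> real) \<Rightarrow> real" where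
  "inner_h h1 h2 M U V = h1 * h2 * (\<Sum>i<M. U i * V i)"

definition norm_h_sq where
  "norm_h_sq h1 h2 M U = inner_h h1 h2 M U U"

definition semi2_h_sq where
  "semi2_h_sq xL l1 N1 yL l2 N2 U =
     norm_h_sq (l1 / real N1) (l2 / real N2) (N1 * N2) (mvec (N1 * N2) (Amat xL l1 N1 yL l2 N2) U)"

definition Pen where
  "Pen xL l1 N1 yL l2 N2 U =
     norm_h_sq (l1 / real N1) (l2 / real N2) (N1 * N2) U + semi2_h_sq xL l1 N1 yL l2 N2 U"

end

theory Submission
  imports Defs "HOL-Analysis.Analysis"
begin

definition symm :: "(nat \<Rightarrow> nat \<Rightarrow> real) \<Rightarrow> bool" where
  "symm A \<longleftrightarrow> (\<forall>i j. A i j = A j i)"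
definition skew :: "(nat \<Rightarrow> nat \<Rightarrow> real) \<Rightarrow> bool" where
  "skew A \<longleftrightarrow> (\<forall>i j. A i j = - A j i)"

lemma dg_swap:
  "dg xL len N s k (gridpt xL len N j) = (-1)^s * dg xL len N s j (gridpt xL len N k)"
proof -
  define m where "m = int N div 2"
  define \<mu> where "\<mu> = 2 * pi / len"
  define \<theta> where "\<theta> = gridpt xL len N k - gridpt xL len N j"
  define f where "f = (\<lambda>l::int. (1 / complex_of_real (aw N l)) * (\<i> * of_int l * complex_of_real \<mu>) ^ s
          * cis (real_of_int l * \<mu> * (- \<theta>)))"
  have "(\<Sum>l\<in>{-m..m}. f l) = (\<Sum>l\<in>uminus ` {-m..m}. f l)"
  proof -
    have "uminus ` {-m..m} = {-m..m}"
      by (auto simp: image_iff intro!: exI[where x="- _"])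
    then show ?thesis by simp
  qed
  also have "\<dots> = (\<Sum>l\<in>{-m..m}. f (- l))"
    by (subst sum.reindex) (auto simp: inj_on_def)
  also have "\<dots> = (\<Sum>l\<in>{-m..m}. (-1)^s * ((1 / complex_of_real (aw N l)) * (\<i> * of_int l * complex_of_real \<mu>) ^ s
          * cis (real_of_int l * \<mu> * \<theta>)))"
  proof (rule sum.cong[OF refl])
    fix l
    have a: "aw N (-l) = aw N l" by (simp add: aw_def)
    have b: "(\<i> * of_int (-l) * complex_of_real \<mu>) ^ s = (-1)^s * (\<i> * of_int l * complex_of_real \<mu>) ^ s"
      by (simp add: power_minus[symmetric])
    show "f (- l) = (-1)^s * ((1 / complex_of_real (aw N l)) * (\<i> * of_int l * complex_of_real \<mu>) ^ s
          * cis (real_of_int l * \<mu> * \<theta>))"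
      unfolding f_def a b by simp
  qed
  finally have *: "(\<Sum>l\<in>{-m..m}. f l) = (-1)^s * (\<Sum>l\<in>{-m..m}. (1 / complex_of_real (aw N l)) * (\<i> * of_int l * complex_of_real \<mu>) ^ s
          * cis (real_of_int l * \<mu> * \<theta>))"
    by (simp add: sum_distrib_left)
  have e: "gridpt xL len N j - gridpt xL len N k = - \<theta>" by (simp add: \<theta>_def)
  show ?thesis
    unfolding dg_def Let_def m_def[symmetric] \<mu>_def[symmetric] e \<theta>_def[symmetric]
    using * unfolding f_def by simp
qed

lemma Dmat_swap: "Dmat xL len N s j k = (-1)^s * Dmat xL len N s k j"
proof -
  have "Dmat xL len N s j k = Re ((-1)^s * dg xL len N s j (gridpt xL len N k))"
    unfolding Dmat_def by (rule arg_cong[where f=Re], rule dg_swap)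
  also have "\<dots> = (-1)^s * Dmat xL len N s k j"
    unfolding Dmat_def by (cases "even s") auto
  finally show ?thesis .
qed

lemma symm_D2: "symm (Dmat xL len N 2)" unfolding symm_def by (intro allI, subst Dmat_swap) simp
lemma skew_D1: "skew (Dmat xL len N 1)" unfolding skew_def by (intro allI, subst Dmat_swap) simp
lemma skew_D3: "skew (Dmat xL len N 3)" unfolding skew_def by (intro allI, subst Dmat_swap) simp
lemma symm_idm: "symm idm" by (auto simp: symm_def idm_def)

lemma kron_ss: "symm A \<Longrightarrow> symm B \<Longrightarrow> symm (kron n A B)"
  by (auto simp: symm_def kron_def)
lemma kron_sk: assumes "symm A" "skew B" shows "skew (kron n A B)"
  unfolding skew_def kron_def
proof (intro allI)
  fix i j
  have a: "A (i div n) (j div n) = A (j div n) (i div n)" using assms(1) unfolding symm_def by blast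
  have b: "B (i mod n) (j mod n) = - B (j mod n) (i mod n)" using assms(2) unfolding skew_def by blast
  show "A (i div n) (j div n) * B (i mod n) (j mod n) = - (A (j div n) (i div n) * B (j mod n) (i mod n))"
    by (simp add: a b)
qed
lemma kron_ks: assumes "skew A" "symm B" shows "skew (kron n A B)"
  unfolding skew_def kron_def
proof (intro allI)
  fix i j
  have a: "A (i div n) (j div n) = - A (j div n) (i div n)" using assms(1) unfolding skew_def by blast
  have b: "B (i mod n) (j mod n) = B (j mod n) (i mod n)" using assms(2) unfolding symm_def by blast
  show "A (i div n) (j div n) * B (i mod n) (j mod n) = - (A (j div n) (i div n) * B (j mod n) (i mod n))"
    by (simp add: a b)
qed
lemma madd_ss: "symm A \<Longrightarrow> symm B \<Longrightarrow> symm (madd A B)"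
  by (auto simp: symm_def madd_def)
lemma madd_kk: assumes "skew A" "skew B" shows "skew (madd A B)"
  unfolding skew_def madd_def
proof (intro allI)
  fix i j
  have a: "A i j = - A j i" using assms(1) unfolding skew_def by blast
  have b: "B i j = - B j i" using assms(2) unfolding skew_def by blast
  show "A i j + B i j = - (A j i + B j i)" by (simp add: a b)
qed

lemma symm_A: "symm (Amat xL l1 N1 yL l2 N2)"
  unfolding Amat_def by (intro madd_ss kron_ss symm_idm symm_D2)
lemma skew_B: "skew (Bmat xL l1 N1 yL l2 N2)"
  unfolding Bmat_def by (intro madd_kk kron_sk kron_ks symm_idm symm_D2 skew_D1 skew_D3)
lemma skew_L: "skew (Lmat xL l1 N1 yL l2 N2)"
  unfolding Lmat_def by (intro madd_kk kron_sk kron_ks symm_idm symm_D2 skew_D1 skew_D3)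

lemma mmult_diag_left: "mmult n (mdiag w) L i j = (if i < n then w i * L i j else 0)"
proof -
  have "mmult n (mdiag w) L i j = (\<Sum>k<n. if i = k then w i * L i j else 0)"
    unfolding mmult_def mdiag_def by (rule sum.cong) auto
  then show ?thesis by simp
qed

lemma mmult_diag_right: "mmult n L (mdiag w) i j = (if j < n then L i j * w j else 0)"
proof -
  have "mmult n L (mdiag w) i j = (\<Sum>k<n. if k = j then L i j * w j else 0)"
    unfolding mmult_def mdiag_def by (rule sum.cong) auto
  then show ?thesis by simp
qed

lemma skew_DW: "i < N1 * N2 \<Longrightarrow> j < N1 * N2 \<Longrightarrow>
  DWmat xL l1 N1 yL l2 N2 p W i j = - DWmat xL l1 N1 yL l2 N2 p W j i"
proof -
  assume ij: "i < N1 * N2" "j < N1 * N2"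
  have a: "Bmat xL l1 N1 yL l2 N2 i j = - Bmat xL l1 N1 yL l2 N2 j i"
    using skew_B[of xL l1 N1 yL l2 N2] unfolding skew_def by blast
  have b: "Lmat xL l1 N1 yL l2 N2 i j = - Lmat xL l1 N1 yL l2 N2 j i"
    using skew_L[of xL l1 N1 yL l2 N2] unfolding skew_def by blast
  show ?thesis
    unfolding DWmat_def Let_def madd_def msmult_def mmult_diag_left mmult_diag_right
    using ij by (simp only: a b if_True) (simp add: algebra_simps)
qed

lemma quad_skew:
  assumes "\<And>i j. i < n \<Longrightarrow> j < n \<Longrightarrow> D i j = - D j i"
  shows "(\<Sum>i<n. u i * mvec n D u i) = 0"
proof -
  let ?S = "(\<Sum>i<n. \<Sum>j<n. u i * D i j * u j)"
  have 1: "(\<Sum>i<n. u i * mvec n D u i) = ?S"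
    unfolding mvec_def by (simp add: sum_distrib_left mult.assoc)
  have "?S = (\<Sum>j<n. \<Sum>i<n. u i * D i j * u j)" by (rule sum.swap)
  also have "\<dots> = (\<Sum>j<n. \<Sum>i<n. - (u j * D j i * u i))"
  proof (intro sum.cong refl)
    fix j i assume "j \<in> {..<n}" "i \<in> {..<n}"
    then have "D i j = - D j i" by (intro assms) auto
    then show "u i * D i j * u j = - (u j * D j i * u i)" by simp
  qed
  also have "\<dots> = - ?S" by (simp add: sum_negf)
  finally show ?thesis using 1 by simp
qed

lemma mvec_mmult: "mvec n (mmult n A B) v i = mvec n A (mvec n B v) i"
proof -
  have "mvec n (mmult n A B) v i = (\<Sum>k<n. \<Sum>j<n. A i j * B j k * v k)"
    unfolding mvec_def mmult_def by (simp add: sum_distrib_right)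
  also have "\<dots> = (\<Sum>j<n. \<Sum>k<n. A i j * B j k * v k)" by (rule sum.swap)
  also have "\<dots> = mvec n A (mvec n B v) i"
    unfolding mvec_def by (simp add: sum_distrib_left mult.assoc)
  finally show ?thesis .
qed

lemma mvec_symm:
  assumes "symm A"
  shows "(\<Sum>i<n. mvec n A u i * w i) = (\<Sum>i<n. u i * mvec n A w i)"
proof -
  have "(\<Sum>i<n. mvec n A u i * w i) = (\<Sum>i<n. \<Sum>k<n. A i k * u k * w i)"
    unfolding mvec_def by (simp add: sum_distrib_right)
  also have "\<dots> = (\<Sum>k<n. \<Sum>i<n. A i k * u k * w i)" by (rule sum.swap)
  also have "\<dots> = (\<Sum>k<n. u k * mvec n A w k)"
    unfolding mvec_def using assms
    by (simp add: sum_distrib_left symm_def mult_ac)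
  finally show ?thesis .
qed

lemma mvec_idm: "i < n \<Longrightarrow> mvec n idm v i = v i"
proof -
  assume "i < n"
  have "mvec n idm v i = (\<Sum>k<n. if i = k then v i else 0)"
    unfolding mvec_def idm_def by (rule sum.cong) auto
  then show ?thesis using \<open>i < n\<close> by simp
qed

lemma mvec_madd: "mvec n (madd A B) v i = mvec n A v i + mvec n B v i"
  unfolding mvec_def madd_def by (simp add: distrib_right sum.distrib)


theorem lemma2p6:
  fixes xL xR yL yR T :: real and N1 N2 p :: nat
    and U U' :: "real \<Rightarrow> nat \<Rightarrow> real"
  assumes "xL < xR" and "yL < yR"
    and "even N1" and "even N2" and "N1 > 0" and "N2 > 0"
    and "p \<ge> 1"
    and deriv: "\<forall>t\<in>{0..T}. \<forall>i<N1 * N2.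
            ((\<lambda>s. U s i) has_real_derivative U' t i) (at t within {0..T})"
    and ode: "\<forall>t\<in>{0..T}. \<forall>i<N1 * N2.
            mvec (N1 * N2)
               (madd idm (mmult (N1 * N2) (Amat xL (xR - xL) N1 yL (yR - yL) N2)
                                          (Amat xL (xR - xL) N1 yL (yR - yL) N2))) (U' t) i
          + mvec (N1 * N2) (DWmat xL (xR - xL) N1 yL (yR - yL) N2 p (U t)) (U t) i = 0"
  shows "\<forall>t\<in>{0..T}. Pen xL (xR - xL) N1 yL (yR - yL) N2 (U t)
                     = Pen xL (xR - xL) N1 yL (yR - yL) N2 (U 0)"
proof
  fix t0 assume t0: "t0 \<in> {0..T}"
  define M where "M = N1 * N2"
  define A where "A = Amat xL (xR - xL) N1 yL (yR - yL) N2"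
  define h where "h = (xR - xL) / real N1 * ((yR - yL) / real N2)"
  define P where "P = (\<lambda>s. Pen xL (xR - xL) N1 yL (yR - yL) N2 (U s))"
  have Peq: "P s = h * (\<Sum>i<M. U s i * U s i) + h * (\<Sum>i<M. mvec M A (U s) i * mvec M A (U s) i)" for s
    unfolding P_def Pen_def semi2_h_sq_def norm_h_sq_def inner_h_def M_def A_def h_def
    by (simp add: mult.assoc)
  have dU: "((\<lambda>s. U s i) has_real_derivative U' t i) (at t within {0..T})"
    if "t \<in> {0..T}" "i < M" for t i
    using deriv that unfolding M_def by blast
  have dA: "((\<lambda>s. mvec M A (U s) i) has_real_derivative mvec M A (U' t) i) (at t within {0..T})"
    if "t \<in> {0..T}" for t i
    unfolding mvec_def
    by (rule DERIV_sum, rule DERIV_cmult, rule dU[OF that]) simp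
  have dP: "(P has_real_derivative 0) (at t within {0..T})" if t: "t \<in> {0..T}" for t
  proof -
    have "(P has_real_derivative
       h * (\<Sum>i<M. U t i * U' t i + U' t i * U t i)
     + h * (\<Sum>i<M. mvec M A (U t) i * mvec M A (U' t) i + mvec M A (U' t) i * mvec M A (U t) i))
      (at t within {0..T})"
      unfolding Peq[abs_def]
      apply (rule DERIV_add)
       apply (rule DERIV_cmult, rule DERIV_sum, rule DERIV_mult', rule dU[OF t], simp, rule dU[OF t], simp)
      apply (rule DERIV_cmult, rule DERIV_sum, rule DERIV_mult', rule dA[OF t], rule dA[OF t])
      done
    moreover have "h * (\<Sum>i<M. U t i * U' t i + U' t i * U t i)
     + h * (\<Sum>i<M. mvec M A (U t) i * mvec M A (U' t) i + mvec M A (U' t) i * mvec M A (U t) i) = 0"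
    proof -
      have s1: "(\<Sum>i<M. mvec M A (U t) i * mvec M A (U' t) i) = (\<Sum>i<M. U t i * mvec M (mmult M A A) (U' t) i)"
        unfolding mvec_mmult A_def by (rule mvec_symm[OF symm_A])
      have s2: "(\<Sum>i<M. U t i * U' t i) + (\<Sum>i<M. U t i * mvec M (mmult M A A) (U' t) i)
          = (\<Sum>i<M. U t i * mvec M (madd idm (mmult M A A)) (U' t) i)"
        by (simp add: mvec_madd mvec_idm distrib_left sum.distrib)
      also have "\<dots> = (\<Sum>i<M. - (U t i * mvec M (DWmat xL (xR - xL) N1 yL (yR - yL) N2 p (U t)) (U t) i))"
      proof (intro sum.cong refl)
        fix i assume "i \<in> {..<M}"
        have "mvec M (madd idm (mmult M A A)) (U' t) i
          + mvec M (DWmat xL (xR - xL) N1 yL (yR - yL) N2 p (U t)) (U t) i = 0"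
          unfolding M_def A_def
          by (rule ode[rule_format, OF t]) (use \<open>i \<in> {..<M}\<close> in \<open>simp add: M_def\<close>)
        then have "mvec M (madd idm (mmult M A A)) (U' t) i
          = - mvec M (DWmat xL (xR - xL) N1 yL (yR - yL) N2 p (U t)) (U t) i" by linarith
        then show "U t i * mvec M (madd idm (mmult M A A)) (U' t) i
          = - (U t i * mvec M (DWmat xL (xR - xL) N1 yL (yR - yL) N2 p (U t)) (U t) i)" by simp
      qed
      also have "\<dots> = 0"
      proof -
        have "(\<Sum>i<M. U t i * mvec M (DWmat xL (xR - xL) N1 yL (yR - yL) N2 p (U t)) (U t) i) = 0"
          unfolding M_def by (rule quad_skew, rule skew_DW)
        then show ?thesis by (simp add: sum_negf)
      qed
      finally have fin: "(\<Sum>i<M. U t i * U' t i) + (\<Sum>i<M. U t i * mvec M (mmult M A A) (U' t) i) = 0" .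
      have e1: "(\<Sum>i<M. U t i * U' t i + U' t i * U t i) = 2 * (\<Sum>i<M. U t i * U' t i)"
        by (simp add: mult.commute sum_distrib_left)
      have e2: "(\<Sum>i<M. mvec M A (U t) i * mvec M A (U' t) i + mvec M A (U' t) i * mvec M A (U t) i)
           = 2 * (\<Sum>i<M. mvec M A (U t) i * mvec M A (U' t) i)"
        by (simp add: mult.commute sum_distrib_left)
      have "h * (\<Sum>i<M. U t i * U' t i + U' t i * U t i)
     + h * (\<Sum>i<M. mvec M A (U t) i * mvec M A (U' t) i + mvec M A (U' t) i * mvec M A (U t) i)
        = 2 * h * ((\<Sum>i<M. U t i * U' t i) + (\<Sum>i<M. U t i * mvec M (mmult M A A) (U' t) i))"
        unfolding e1 e2 s1 by (simp add: algebra_simps)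
      also have "\<dots> = 0" unfolding fin by simp
      finally show ?thesis .
    qed
    ultimately show ?thesis by simp
  qed
  obtain c where "\<forall>x\<in>{0..T}. P x = c"
    using has_field_derivative_zero_constant[of "{0..T}" P] dP by auto
  moreover have "0 \<in> {0..T}" using t0 by auto
  ultimately show "Pen xL (xR - xL) N1 yL (yR - yL) N2 (U t0) = Pen xL (xR - xL) N1 yL (yR - yL) N2 (U 0)"
    using t0 unfolding P_def by auto
qed

end
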